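(* Let $\mathcal{C}$ be a covering of a finite set $E$ and let $SH(X)=\bigcup\{K\in\mathcal{C}:K\cap X\neq\emptyset\}$ for $X\subseteq E$. Then $\mathcal{C}$ satisfies the condition (TRA): for all $x,y,z\in E$, if there are $K_1,K_2\in\mathcal{C}$ with $x,z\in K_1$ and $y,z\in K_2$, then there exists $K_3\in\mathcal{C}$ with $x,y\in K_3$; if and only if $SH$ is the closure operator of some matroid on $E$.
   Context: A covering of $E$ is a family of nonempty subsets of $E$ with union $E$. The closure operator of a matroid with rank function $r$ is $cl(X)=\{a\in E:r(X\cup\{a\})=r(X)\}$. *)

theory Defs
  imports Main
begin

definition covering :: "'a set \<Rightarrow> 'a set set \<Rightarrow> bool" where
  "covering E C \<longleftrightarrow> (\<forall>K\<in>C. K \<noteq> {} \<and> K \<subseteq> E) \<and> \<Union>C = E"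

definition SH :: "'a set set \<Rightarrow> 'a set \<Rightarrow> 'a set" where
  "SH C X = \<Union>{K\<in>C. K \<inter> X \<noteq> {}}"

definition TRA :: "'a set \<Rightarrow> 'a set set \<Rightarrow> bool" where
  "TRA E C \<longleftrightarrow> (\<forall>x\<in>E. \<forall>y\<in>E. \<forall>z\<in>E.
     (\<exists>K1\<in>C. \<exists>K2\<in>C. x \<in> K1 \<and> z \<in> K1 \<and> y \<in> K2 \<and> z \<in> K2)
       \<longrightarrow> (\<exists>K3\<in>C. x \<in> K3 \<and> y \<in> K3))"

definition matroid_rank :: "'a set \<Rightarrow> ('a set \<Rightarrow> nat) \<Rightarrow> bool" where
  "matroid_rank E r \<longleftrightarrow>
     (\<forall>X. X \<subseteq> E \<longrightarrow> r X \<le> card X) \<and>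
     (\<forall>X Y. X \<subseteq> Y \<and> Y \<subseteq> E \<longrightarrow> r X \<le> r Y) \<and>
     (\<forall>X Y. X \<subseteq> E \<and> Y \<subseteq> E \<longrightarrow> r (X \<union> Y) + r (X \<inter> Y) \<le> r X + r Y)"

definition matroid_cl :: "'a set \<Rightarrow> ('a set \<Rightarrow> nat) \<Rightarrow> 'a set \<Rightarrow> 'a set" where
  "matroid_cl E r X = {a\<in>E. r (X \<union> {a}) = r X}"

end

theory Submission
  imports Defs
begin

lemma fwd:
  fixes E :: "'a set" and C :: "'a set set"
  assumes fin: "finite E" and cov: "covering E C" and tra: "TRA E C"
  shows "\<exists>r. matroid_rank E r \<and> (\<forall>X. X \<subseteq> E \<longrightarrow> SH C X = matroid_cl E r X)"
proof -
  define R where "R = (\<lambda>x y. \<exists>K\<in>C. x \<in> K \<and> y \<in> K)"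
  have sub: "\<And>K. K \<in> C \<Longrightarrow> K \<subseteq> E" using cov unfolding covering_def by blast
  have refl: "\<And>x. x \<in> E \<Longrightarrow> R x x" using cov unfolding covering_def R_def by blast
  have sym: "\<And>x y. R x y \<Longrightarrow> R y x" unfolding R_def by blast
  have trans: "\<And>x y z. R x z \<Longrightarrow> R z y \<Longrightarrow> R x y"
  proof -
    fix x y z assume a: "R x z" "R z y"
    then obtain K1 K2 where k: "K1 \<in> C" "K2 \<in> C" "x \<in> K1" "z \<in> K1" "z \<in> K2" "y \<in> K2"
      unfolding R_def by blast
    hence xE: "x \<in> E" and yE: "y \<in> E" and zE: "z \<in> E" using sub by blast+
    have "\<exists>K1\<in>C. \<exists>K2\<in>C. x \<in> K1 \<and> z \<in> K1 \<and> y \<in> K2 \<and> z \<in> K2" using k by blast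
    hence "\<exists>K3\<in>C. x \<in> K3 \<and> y \<in> K3" by (rule tra[unfolded TRA_def, rule_format, OF xE yE zE])
    thus "R x y" unfolding R_def by simp
  qed
  define cls where "cls = (\<lambda>x. {y. R x y})"
  have clseq: "\<And>a x. a \<in> E \<Longrightarrow> cls a = cls x \<longleftrightarrow> R x a"
  proof
    fix a x assume "a \<in> E" "cls a = cls x"
    hence "a \<in> cls x" using refl unfolding cls_def by blast
    thus "R x a" unfolding cls_def by simp
  next
    fix a x assume "R x a"
    thus "cls a = cls x" unfolding cls_def using sym trans by blast
  qed
  define r where "r = (\<lambda>X. card (cls ` X))"
  have finX: "\<And>X. X \<subseteq> E \<Longrightarrow> finite X" using fin finite_subset by blast
  have "matroid_rank E r"
    unfolding matroid_rank_def
  proof (intro conjI allI impI)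
    fix X assume "X \<subseteq> E" thus "r X \<le> card X" unfolding r_def using card_image_le finX by blast
  next
    fix X Y assume "X \<subseteq> Y \<and> Y \<subseteq> E"
    thus "r X \<le> r Y" unfolding r_def using finX by (meson card_mono finite_imageI image_mono)
  next
    fix X Y assume a: "X \<subseteq> E \<and> Y \<subseteq> E"
    hence f: "finite (cls ` X)" "finite (cls ` Y)" using finX by auto
    have "card (cls ` (X \<inter> Y)) \<le> card (cls ` X \<inter> cls ` Y)"
      using f(1) by (intro card_mono) (auto intro: image_Int_subset)
    moreover have "card (cls ` X \<union> cls ` Y) + card (cls ` X \<inter> cls ` Y) = card (cls ` X) + card (cls ` Y)"
      using card_Un_Int[OF f] by simp
    ultimately show "r (X \<union> Y) + r (X \<inter> Y) \<le> r X + r Y" unfolding r_def by (simp add: image_Un)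
  qed
  moreover have "\<forall>X. X \<subseteq> E \<longrightarrow> SH C X = matroid_cl E r X"
  proof (intro allI impI)
    fix X assume X: "X \<subseteq> E"
    have f: "finite (cls ` X)" using finX X by auto
    show "SH C X = matroid_cl E r X"
    proof (rule set_eqI)
      fix a
      have "a \<in> SH C X \<longleftrightarrow> a \<in> E \<and> (\<exists>x\<in>X. R x a)"
        unfolding SH_def R_def using sub by auto
      moreover have "a \<in> E \<Longrightarrow> r (X \<union> {a}) = r X \<longleftrightarrow> (\<exists>x\<in>X. R x a)"
      proof -
        assume aE: "a \<in> E"
        have "r (X \<union> {a}) = card (insert (cls a) (cls ` X))" unfolding r_def by simp
        also have "\<dots> = r X \<longleftrightarrow> cls a \<in> cls ` X" unfolding r_def using f
          by (simp add: card_insert_if)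
        also have "\<dots> \<longleftrightarrow> (\<exists>x\<in>X. R x a)" using clseq[OF aE] by blast
        finally show ?thesis .
      qed
      ultimately show "a \<in> SH C X \<longleftrightarrow> a \<in> matroid_cl E r X"
        unfolding matroid_cl_def by blast
    qed
  qed
  ultimately show ?thesis by blast
qed

lemma bwd:
  fixes E :: "'a set" and C :: "'a set set"
  assumes cov: "covering E C" and mr: "matroid_rank E r"
    and cl: "\<forall>X. X \<subseteq> E \<longrightarrow> SH C X = matroid_cl E r X"
  shows "TRA E C"
  unfolding TRA_def
proof (intro ballI impI)
  fix x y z assume xE: "x \<in> E" and yE: "y \<in> E" and zE: "z \<in> E"
    and "\<exists>K1\<in>C. \<exists>K2\<in>C. x \<in> K1 \<and> z \<in> K1 \<and> y \<in> K2 \<and> z \<in> K2"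
  then obtain K1 K2 where k: "K1 \<in> C" "K2 \<in> C" "x \<in> K1" "z \<in> K1" "y \<in> K2" "z \<in> K2" by blast
  have card: "\<And>X. X \<subseteq> E \<Longrightarrow> r X \<le> card X" and mono: "\<And>X Y. X \<subseteq> Y \<Longrightarrow> Y \<subseteq> E \<Longrightarrow> r X \<le> r Y"
    and smod: "\<And>X Y. X \<subseteq> E \<Longrightarrow> Y \<subseteq> E \<Longrightarrow> r (X \<union> Y) + r (X \<inter> Y) \<le> r X + r Y"
    using mr unfolding matroid_rank_def by blast+
  have r0: "r {} = 0" using card[of "{}"] by simp
  have one: "\<And>a. a \<in> E \<Longrightarrow> r {a} = 1"
  proof -
    fix a assume aE: "a \<in> E"
    have "SH C {} = {}" unfolding SH_def by auto
    hence "a \<notin> matroid_cl E r {}" using cl by auto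
    hence "r {a} \<noteq> 0" using aE r0 unfolding matroid_cl_def by auto
    moreover have "r {a} \<le> 1" using card[of "{a}"] aE by simp
    ultimately show "r {a} = 1" by simp
  qed
  have "x \<in> SH C {z}" "y \<in> SH C {z}" using k unfolding SH_def by blast+
  hence "x \<in> matroid_cl E r {z}" "y \<in> matroid_cl E r {z}" using cl zE by auto
  hence rx: "r {z, x} = 1" and ry: "r {z, y} = 1" using one[OF zE]
    unfolding matroid_cl_def by (auto simp: insert_commute)
  have "r ({z,x} \<union> {z,y}) + r ({z,x} \<inter> {z,y}) \<le> 2" using smod[of "{z,x}" "{z,y}"] rx ry xE yE zE by simp
  moreover have "r ({z,x} \<inter> {z,y}) \<ge> r {z}" using mono[of "{z}" "{z,x} \<inter> {z,y}"] xE zE by auto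
  ultimately have "r ({z,x} \<union> {z,y}) \<le> 1" using one[OF zE] by simp
  hence "r {x,y} \<le> 1" using mono[of "{x,y}" "{z,x} \<union> {z,y}"] xE yE zE by auto
  moreover have "r {x,y} \<ge> r {x}" using mono[of "{x}" "{x,y}"] xE yE by auto
  ultimately have "r ({x} \<union> {y}) = r {x}" using one[OF xE] by (simp add: insert_commute)
  hence "y \<in> matroid_cl E r {x}" using yE unfolding matroid_cl_def by simp
  hence "y \<in> SH C {x}" using cl xE by auto
  thus "\<exists>K3\<in>C. x \<in> K3 \<and> y \<in> K3" unfolding SH_def by blast
qed

theorem theorem9:
  fixes E :: "'a set" and C :: "'a set set"
  assumes "finite E" and "covering E C"
  shows "TRA E C \<longleftrightarrow>
    (\<exists>r. matroid_rank E r \<and> (\<forall>X. X \<subseteq> E \<longrightarrow> SH C X = matroid_cl E r X))"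
proof
  assume "TRA E C" thus "\<exists>r. matroid_rank E r \<and> (\<forall>X. X \<subseteq> E \<longrightarrow> SH C X = matroid_cl E r X)"
    by (rule fwd[OF assms])
next
  assume "\<exists>r. matroid_rank E r \<and> (\<forall>X. X \<subseteq> E \<longrightarrow> SH C X = matroid_cl E r X)"
  then obtain r where "matroid_rank E r" "\<forall>X. X \<subseteq> E \<longrightarrow> SH C X = matroid_cl E r X" by blast
  thus "TRA E C" by (rule bwd[OF assms(2)])
qed

end
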